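(* Let $n=p'pq$ where $p',p,q$ are distinct odd primes, let $A=L(n;p')$, and let $n'=n/p$. Then $U(n')\subseteq f(A)$, where $f:\mathbb{Z}_n\to\mathbb{Z}_{n'}$ is the natural map.
   Context: $U(m)$ is the unit group of $\mathbb{Z}_m$. For odd $m=\prod p_i^{r_i}$, prime $p\mid m$ and $a\in U(m)$, $\left(\frac{a}{p}\right)$ is the Legendre symbol of the image of $a$ mod $p$ and $\left(\frac{a}{m}\right)=\prod\left(\frac{a}{p_i}\right)^{r_i}$; $L(m;p')=\{a\in U(m):\left(\frac{a}{m}\right)=\left(\frac{a}{p'}\right)\}$ for a prime $p'\mid m$. The natural map $\mathbb{Z}_n\to\mathbb{Z}_{n'}$ is $a+n\mathbb{Z}\mapsto a+n'\mathbb{Z}$. *)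

theory Defs
  imports "HOL-Number_Theory.Number_Theory"
begin

text \<open>Elements of Z_m are represented by their least nonnegative residues 0..m-1.\<close>

definition U :: "nat \<Rightarrow> nat set" where
  "U m = {a. a < m \<and> coprime a m}"

definition jac :: "nat \<Rightarrow> nat \<Rightarrow> int" where
  "jac a m = (\<Prod>p\<in>prime_factors m. Legendre (int a) (int p) ^ multiplicity p m)"

definition L :: "nat \<Rightarrow> nat \<Rightarrow> nat set" where
  "L m p' = {a \<in> U m. jac a m = Legendre (int a) (int p')}"

definition natmap :: "nat \<Rightarrow> nat \<Rightarrow> nat" where
  "natmap n' a = a mod n'"

end

theory Submission
  imports Defs
begin

lemma Legendre_cong_eq:
  assumes "[a = b] (mod m)"
  shows "Legendre a m = Legendre b m"
proof -
  have 1: "[a = 0] (mod m) \<longleftrightarrow> [b = 0] (mod m)"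
    using assms cong_sym cong_trans by blast
  have 2: "QuadRes m a \<longleftrightarrow> QuadRes m b"
    unfolding QuadRes_def using assms cong_sym cong_trans by blast
  show ?thesis unfolding Legendre_def using 1 2 by simp
qed

lemma exists_nonres:
  fixes p :: nat
  assumes "prime p" "odd p"
  shows "\<exists>r. 0 < r \<and> r < p \<and> Legendre (int r) (int p) = -1"
proof -
  have p3: "p \<ge> 3" using assms prime_ge_2_nat[of p] by (cases "p = 2") auto
  define f where "f x = x^2 mod p" for x :: nat
  have sub: "f ` {1..p-1} \<subseteq> {0..<p}" unfolding f_def using p3 by auto
  have ninj: "\<not> inj_on f {1..p-1}"
  proof
    assume "inj_on f {1..p-1}"
    moreover have "f 1 = f (p-1)"
    proof -
      have "int ((p-1)^2) = (int p - 1)^2" using p3 by (simp add: of_nat_diff)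
      also have "... = int p * (int p - 2) + 1" by (simp add: power2_eq_square algebra_simps)
      finally have "int ((p-1)^2) mod int p = 1 mod int p" by simp
      then have "[int ((p-1)^2) = int 1] (mod int p)" unfolding cong_def by simp
      then have "[(p-1)^2 = 1] (mod p)" by (simp only: cong_int_iff)
      then show ?thesis unfolding f_def cong_def by simp
    qed
    ultimately have "1 = p - 1" using p3 by (auto dest: inj_onD)
    then show False using p3 by simp
  qed
  have "card (f ` {1..p-1}) < card {1..p-1}"
    proof -
    have "card (f ` {1..p-1}) \<le> card {1..p-1}" by (rule card_image_le) simp
    moreover have "card (f ` {1..p-1}) \<noteq> card {1..p-1}" using ninj eq_card_imp_inj_on by blast
    ultimately show ?thesis by simp
  qed
  then have "\<not> {1..p-1} \<subseteq> f ` {1..p-1}"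
    using card_mono[of "f ` {1..p-1}" "{1..p-1}"] by auto
  then obtain r where r: "r \<in> {1..p-1}" "r \<notin> f ` {1..p-1}" by blast
  have nz: "\<not> [int r = 0] (mod int p)"
    using r(1) p3 by (auto simp: cong_0_iff dest: dvd_imp_le)
  have nq: "\<not> QuadRes (int p) (int r)"
  proof
    assume "QuadRes (int p) (int r)"
    then obtain y where y: "[y^2 = int r] (mod int p)" unfolding QuadRes_def by blast
    define z where "z = nat (y mod int p)"
    have zc: "[int z = y] (mod int p)" unfolding z_def using p3 by (simp add: cong_def)
    have "[int (z^2) = int r] (mod int p)"
      using cong_trans[OF cong_pow[OF zc, of 2] y] by simp
    then have zr: "[z^2 = r] (mod p)" using cong_int_iff by blast
    have "z < p" unfolding z_def using p3 by (auto simp: nat_less_iff)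
    moreover have "z \<noteq> 0"
    proof
      assume "z = 0"
      then have "[r = 0] (mod p)" using zr cong_sym by (simp add: cong_def)
      then have "[int r = int 0] (mod int p)" by (simp only: cong_int_iff)
      then show False using nz by simp
    qed
    ultimately have "z \<in> {1..p-1}" by auto
    moreover have "f z = r"
    proof -
      have rp: "r < p" using r(1) p3 by auto
      show ?thesis unfolding f_def using zr rp by (simp add: cong_def)
    qed
    ultimately show False using r(2) by blast
  qed
  show ?thesis using r nz nq unfolding Legendre_def by (intro exI[of _ r]) auto
qed

lemma jac3:
  fixes p' p q a :: nat
  assumes "prime p'" "prime p" "prime q" "p' \<noteq> p" "p' \<noteq> q" "p \<noteq> q"
  shows "jac a (p' * p * q) = Legendre (int a) (int p') * Legendre (int a) (int p) * Legendre (int a) (int q)"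
proof -
  have pf: "prime_factorization (p' * p * q) = {#p', p, q#}"
    using assms by (simp add: prime_factorization_mult prime_factorization_prime prime_gt_0_nat
        flip: One_nat_def)
  have pfs: "prime_factors (p' * p * q) = {p', p, q}" using pf by simp
  have m: "multiplicity x (p' * p * q) = 1" if "x \<in> {p', p, q}" for x
  proof -
    have "prime x" using that assms by auto
    then have "multiplicity x (p' * p * q) = count {#p', p, q#} x"
      using count_prime_factorization_prime[of x "p' * p * q"] pf by simp
    then show ?thesis using that assms by auto
  qed
  have "jac a (p' * p * q) = (\<Prod>x\<in>{p', p, q}. Legendre (int a) (int x))"
    unfolding jac_def pfs using m by (intro prod.cong) auto
  also have "... = Legendre (int a) (int p') * Legendre (int a) (int p) * Legendre (int a) (int q)"
    using assms by simp
  finally show ?thesis .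
qed

theorem lemma5p2:
  fixes p' p q n :: nat
  assumes "prime p'" "prime p" "prime q"
    and "odd p'" "odd p" "odd q"
    and "p' \<noteq> p" "p' \<noteq> q" "p \<noteq> q"
    and "n = p' * p * q"
  shows "U (n div p) \<subseteq> natmap (n div p) ` L n p'"
proof
  fix b assume b: "b \<in> U (n div p)"
  define m where "m = p' * q"
  have p0: "p > 0" using assms(2) prime_gt_0_nat by blast
  have mdef: "n div p = m" unfolding m_def assms(10) using p0 by simp
  have nm: "n = m * p" unfolding m_def assms(10) by simp
  have bm: "b < m" "coprime b m" using b unfolding mdef U_def by auto
  have cq: "coprime b q" using bm(2) unfolding m_def by simp
  have nqb: "\<not> [int b = 0] (mod int q)"
  proof
    assume "[int b = 0] (mod int q)"
    then have "q dvd b" by (simp add: cong_0_iff)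
    then have "is_unit q" using coprime_common_divisor[OF cq _ dvd_refl] by blast
    then show False using assms(3) by (simp add: not_prime_unit)
  qed
  have Lq: "Legendre (int b) (int q) = 1 \<or> Legendre (int b) (int q) = -1"
    unfolding Legendre_def using nqb by auto
  obtain r where r: "0 < r" "r < p" "Legendre (int r) (int p) = Legendre (int b) (int q)"
  proof (cases "Legendre (int b) (int q) = 1")
    case True
    have "Legendre 1 (int p) = 1" unfolding Legendre_def QuadRes_def
      using prime_gt_1_nat[OF assms(2)] by (auto simp: cong_def intro: exI[of _ 1])
    then show ?thesis using that[of 1] True prime_gt_1_nat[OF assms(2)] by simp
  next
    case False
    then show ?thesis using exists_nonres[OF assms(2) assms(5)] that Lq by auto
  qed
  have cop: "coprime m p" unfolding m_def using assms
    by (simp add: primes_coprime)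
  obtain x where x: "[x = b] (mod m)" "[x = r] (mod p)"
    using binary_chinese_remainder_nat[OF cop] by blast
  define a where "a = x mod n"
  have am: "[a = b] (mod m)" unfolding a_def nm using x(1)
    by (simp add: mod_mult_cong_right)
  have ap: "[a = r] (mod p)" unfolding a_def nm using x(2)
    by (simp add: mod_mult_cong_left)
  have n0: "n > 0" using assms prime_gt_0_nat by simp
  have alt: "a < n" unfolding a_def using n0 by simp
  have amod: "a mod m = b" using am bm(1) by (simp add: cong_def)
  have cam: "coprime a m" using cong_imp_coprime[OF cong_sym[OF am]] bm(2) by blast
  have crp: "coprime r p"
  proof -
    have "\<not> p dvd r" using r(1,2) by (auto dest: dvd_imp_le)
    then show ?thesis using assms(2) by (simp add: coprime_commute prime_imp_coprime)
  qed
  have cap: "coprime a p" using cong_imp_coprime[OF cong_sym[OF ap]] crp by blast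
  have can: "coprime a n" using cam cap unfolding nm by simp
  have Laq: "Legendre (int a) (int q) = Legendre (int b) (int q)"
  proof (rule Legendre_cong_eq)
    have "[a = b] (mod q)" using am unfolding m_def using cong_modulus_mult_nat[of a b q p'] by (simp add: mult.commute)
    then show "[int a = int b] (mod int q)" using cong_int_iff by blast
  qed
  have Lap: "Legendre (int a) (int p) = Legendre (int b) (int q)"
    proof -
    have "[int a = int r] (mod int p)" using ap by (simp only: cong_int_iff)
    then show ?thesis using Legendre_cong_eq r(3) by simp
  qed
  have "jac a n = Legendre (int a) (int p') * (Legendre (int b) (int q) * Legendre (int b) (int q))"
    unfolding assms(10) jac3[OF assms(1-3,7-9)] Laq Lap by simp
  also have "... = Legendre (int a) (int p')" using Lq by auto
  finally have "a \<in> L n p'" unfolding L_def U_def using alt can by simp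
  moreover have "b = natmap (n div p) a" unfolding natmap_def mdef amod ..
  ultimately show "b \<in> natmap (n div p) ` L n p'" by blast
qed

end
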